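(* For every prime power $q>2$ there exist $n\ge3$ and an equidistant linear code $\mathcal{U}\subseteq\mathbb{P}_q(n)$ with $|\mathcal{U}|\ge 2^{n+1}$.
   Context: $\mathbb{P}_q(n)$ denotes the set of all subspaces of $\mathbb{F}_q^n$. For subspaces $X,Y$ the subspace distance is $d_S(X,Y)=\dim X+\dim Y-2\dim(X\cap Y)$. A linear code in $\mathbb{P}_q(n)$ is a subset $\mathcal{U}\subseteq\mathbb{P}_q(n)$ with $\{0\}\in\mathcal{U}$ for which there exists a map $\boxplus:\mathcal{U}\times\mathcal{U}\to\mathcal{U}$ such that (i) $(\mathcal{U},\boxplus)$ is an abelian group; (ii) its identity element is $\{0\}$; (iii) $X\boxplus X=\{0\}$ for all $X\in\mathcal{U}$; (iv) $d_S(Y_1\boxplus X,Y_2\boxplus X)=d_S(Y_1,Y_2)$ for all $Y_1,Y_2,X\in\mathcal{U}$. It is equidistant if there is $r$ with $d_S(X,Y)=r$ for all distinct $X,Y\in\mathcal{U}$. *)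

theory Defs
  imports Complex_Main "HOL-Library.Function_Algebras"
begin

text \<open>Vectors of F_q^n are modelled as functions nat => 'a vanishing outside {0..<n};
  'a is the (finite) field F_q.\<close>

definition fscale :: "'a::field \<Rightarrow> (nat \<Rightarrow> 'a) \<Rightarrow> (nat \<Rightarrow> 'a)" where
  "fscale c v = (\<lambda>i. c * v i)"

lemma vector_space_fscale: "vector_space (fscale :: 'a::field \<Rightarrow> _)"
  unfolding vector_space_def fscale_def by (auto simp: fun_eq_iff algebra_simps)

definition fvec :: "nat \<Rightarrow> (nat \<Rightarrow> 'a::field) set" where
  "fvec n = {v. \<forall>i\<ge>n. v i = 0}"

definition Pq :: "'a::field itself \<Rightarrow> nat \<Rightarrow> (nat \<Rightarrow> 'a) set set" where
  "Pq _ n = {S. S \<subseteq> fvec n \<and> module.subspace (fscale :: 'a \<Rightarrow> _) S}"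

definition sdim :: "(nat \<Rightarrow> 'a::field) set \<Rightarrow> nat" where
  "sdim X = vector_space.dim (fscale :: 'a \<Rightarrow> _) X"

definition dS :: "(nat \<Rightarrow> 'a::field) set \<Rightarrow> (nat \<Rightarrow> 'a) set \<Rightarrow> nat" where
  "dS X Y = sdim X + sdim Y - 2 * sdim (X \<inter> Y)"

definition zero_space :: "(nat \<Rightarrow> 'a::field) set" where
  "zero_space = {(\<lambda>_. 0)}"

definition linear_code :: "'a::field itself \<Rightarrow> nat \<Rightarrow> (nat \<Rightarrow> 'a) set set \<Rightarrow> bool" where
  "linear_code T n U \<longleftrightarrow> U \<subseteq> Pq T n \<and> zero_space \<in> U \<and>
    (\<exists>bp. (\<forall>X\<in>U. \<forall>Y\<in>U. bp X Y \<in> U) \<and>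
      (\<forall>X\<in>U. \<forall>Y\<in>U. \<forall>Z\<in>U. bp (bp X Y) Z = bp X (bp Y Z)) \<and>
      (\<forall>X\<in>U. \<forall>Y\<in>U. bp X Y = bp Y X) \<and>
      (\<forall>X\<in>U. bp zero_space X = X \<and> bp X zero_space = X) \<and>
      (\<forall>X\<in>U. \<exists>Y\<in>U. bp X Y = zero_space) \<and>
      (\<forall>X\<in>U. bp X X = zero_space) \<and>
      (\<forall>Y1\<in>U. \<forall>Y2\<in>U. \<forall>X\<in>U. dS (bp Y1 X) (bp Y2 X) = dS Y1 Y2))"

definition equidistant :: "(nat \<Rightarrow> 'a::field) set set \<Rightarrow> bool" where
  "equidistant U \<longleftrightarrow> (\<exists>r. \<forall>X\<in>U. \<forall>Y\<in>U. X \<noteq> Y \<longrightarrow> dS X Y = r)"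

end

theory Submission
  imports Defs
begin
interpretation V: vector_space "fscale :: 'a::field \<Rightarrow> (nat \<Rightarrow> 'a) \<Rightarrow> _"
  by (rule vector_space_fscale)

definition e0 :: "nat \<Rightarrow> 'a::field" where "e0 = (\<lambda>i. if i = 0 then 1 else 0)"

lemma sdim_eq: "sdim X = V.dim X" unfolding sdim_def by simp

lemma mem_span2:
  "(x::nat\<Rightarrow>'a::field) \<in> V.span {e0, v} \<longleftrightarrow> (\<exists>k c. x = (\<lambda>i. k * e0 i + c * v i))"
proof
  assume "x \<in> V.span {e0, v}"
  then obtain k c where "x - fscale k e0 = fscale c v"
    unfolding V.span_breakdown_eq V.span_singleton by auto
  then have "x = (\<lambda>i. k * e0 i + c * v i)"
    by (auto simp: fscale_def fun_eq_iff algebra_simps)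
  then show "\<exists>k c. x = (\<lambda>i. k * e0 i + c * v i)" by blast
next
  assume "\<exists>k c. x = (\<lambda>i. k * e0 i + c * v i)"
  then obtain k c where "x = (\<lambda>i. k * e0 i + c * v i)" by blast
  then have "x - fscale k e0 = fscale c v" by (auto simp: fscale_def fun_eq_iff)
  then show "x \<in> V.span {e0, v}"
    unfolding V.span_breakdown_eq V.span_singleton by auto
qed

lemma mem_span1:
  "(x::nat\<Rightarrow>'a::field) \<in> V.span {e0} \<longleftrightarrow> (\<exists>k. x = (\<lambda>i. k * e0 i))"
  unfolding V.span_singleton by (auto simp: fscale_def)

lemma code_from_family:
  fixes U :: "(nat \<Rightarrow> 'a::field) set set"
  assumes fin: "finite U" and cU: "card U = 2^m" and z: "zero_space \<in> U"
    and sub: "U \<subseteq> Pq TYPE('a) n" and eqd: "\<forall>X\<in>U. \<forall>Y\<in>U. X \<noteq> Y \<longrightarrow> dS X Y = r"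
  shows "linear_code TYPE('a) n U \<and> equidistant U"
proof -
  let ?P = "Pow {..<m}"
  have "card (?P - {{}}) = card (U - {zero_space})"
    using cU z fin by (simp add: card_Pow)
  then obtain h where h: "bij_betw h (?P - {{}}) (U - {zero_space})"
    using fin finite_same_card_bij by (metis finite_Diff finite_Pow_iff finite_lessThan)
  define g where "g S = (if S = {} then zero_space else h S)" for S
  have gb: "bij_betw g ?P U"
  proof -
    have "bij_betw g (?P - {{}}) (U - {zero_space})"
      using h by (rule bij_betw_cong[THEN iffD1, rotated]) (auto simp: g_def)
    then have "bij_betw g ((?P - {{}}) \<union> {{}}) ((U - {zero_space}) \<union> {g {}})"
      by (intro notIn_Un_bij_betw) (auto simp: g_def)
    moreover have "(?P - {{}}) \<union> {{}} = ?P" by auto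
    moreover have "(U - {zero_space}) \<union> {g {}} = U" using z by (auto simp: g_def)
    ultimately show ?thesis by simp
  qed
  have inj: "inj_on g ?P" and img: "g ` ?P = U" using gb by (auto simp: bij_betw_def)
  define f where "f = inv_into ?P g"
  have fU: "X \<in> U \<Longrightarrow> f X \<in> ?P" for X unfolding f_def using img inv_into_into by metis
  have gf: "X \<in> U \<Longrightarrow> g (f X) = X" for X unfolding f_def using img f_inv_into_f by metis
  have fg: "S \<in> ?P \<Longrightarrow> f (g S) = S" for S unfolding f_def using inj inv_into_f_f by metis
  have g0: "g {} = zero_space" by (simp add: g_def)
  have f0: "f zero_space = {}" using fg[of "{}"] g0 by simp
  define bp where "bp X Y = g ((f X - f Y) \<union> (f Y - f X))" for X Y
  have cl: "X \<in> U \<Longrightarrow> Y \<in> U \<Longrightarrow> bp X Y \<in> U" for X Y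
    unfolding bp_def using fU img by blast
  have fbp: "X \<in> U \<Longrightarrow> Y \<in> U \<Longrightarrow> f (bp X Y) = (f X - f Y) \<union> (f Y - f X)" for X Y
    unfolding bp_def using fU by (intro fg) blast
  have dSself: "dS Y Y = 0" for Y :: "(nat \<Rightarrow> 'a) set" by (simp add: dS_def)
  have "\<exists>bp. (\<forall>X\<in>U. \<forall>Y\<in>U. bp X Y \<in> U) \<and>
      (\<forall>X\<in>U. \<forall>Y\<in>U. \<forall>Z\<in>U. bp (bp X Y) Z = bp X (bp Y Z)) \<and>
      (\<forall>X\<in>U. \<forall>Y\<in>U. bp X Y = bp Y X) \<and>
      (\<forall>X\<in>U. bp zero_space X = X \<and> bp X zero_space = X) \<and>
      (\<forall>X\<in>U. \<exists>Y\<in>U. bp X Y = zero_space) \<and>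
      (\<forall>X\<in>U. bp X X = zero_space) \<and>
      (\<forall>Y1\<in>U. \<forall>Y2\<in>U. \<forall>X\<in>U. dS (bp Y1 X) (bp Y2 X) = dS Y1 Y2)"
  proof (intro exI[of _ bp] conjI ballI)
    fix X Y Z assume X: "X \<in> U" and Y: "Y \<in> U" and Z: "Z \<in> U"
    show "bp (bp X Y) Z = bp X (bp Y Z)"
    proof -
      have e: "(f (bp X Y) - f Z) \<union> (f Z - f (bp X Y)) = (f X - f (bp Y Z)) \<union> (f (bp Y Z) - f X)"
        unfolding fbp[OF X Y] fbp[OF Y Z] by blast
      show ?thesis unfolding bp_def[of "bp X Y"] bp_def[of X "bp Y Z"] e ..
    qed
  next
    fix X Y assume X: "X \<in> U" and Y: "Y \<in> U"
    show "bp X Y \<in> U" by (rule cl[OF X Y])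
    show "bp X Y = bp Y X" unfolding bp_def by (simp add: Un_commute)
  next
    fix X assume X: "X \<in> U"
    show "bp zero_space X = X" "bp X zero_space = X" unfolding bp_def using f0 gf[OF X] by auto
    show "bp X X = zero_space" unfolding bp_def using g0 by simp
    then show "\<exists>Y\<in>U. bp X Y = zero_space" using X by blast
  next
    fix Y1 Y2 X assume Y1: "Y1 \<in> U" and Y2: "Y2 \<in> U" and X: "X \<in> U"
    show "dS (bp Y1 X) (bp Y2 X) = dS Y1 Y2"
    proof (cases "Y1 = Y2")
      case True then show ?thesis by (simp add: dSself)
    next
      case False
      have "f Y1 \<noteq> f Y2" using False gf Y1 Y2 by metis
      then have "f (bp Y1 X) \<noteq> f (bp Y2 X)" using fbp[OF Y1 X] fbp[OF Y2 X] by blast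
      then have ne: "bp Y1 X \<noteq> bp Y2 X" by metis
      have "dS (bp Y1 X) (bp Y2 X) = r" using eqd cl[OF Y1 X] cl[OF Y2 X] ne by blast
      moreover have "dS Y1 Y2 = r" using eqd Y1 Y2 False by blast
      ultimately show ?thesis by simp
    qed
  qed
  then have "linear_code TYPE('a) n U" using z sub unfolding linear_code_def by (intro conjI)
  moreover have "equidistant U" using eqd unfolding equidistant_def by blast
  ultimately show ?thesis ..
qed

definition pl :: "(nat \<Rightarrow> 'a::field) \<Rightarrow> (nat \<Rightarrow> 'a) set" where
  "pl v = V.span {e0, v}"

lemma e0_0[simp]: "e0 0 = 1" and e0_Suc[simp]: "e0 (Suc i) = 0" by (auto simp: e0_def)

lemma e0_nz: "(e0 :: nat \<Rightarrow> 'a::field) \<noteq> 0"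
proof
  assume "(e0 :: nat \<Rightarrow> 'a) = 0"
  then have "e0 0 = (0 :: 'a)" by simp
  then show False by simp
qed

lemma dim_line: "V.dim (V.span {e0 :: nat \<Rightarrow> 'a::field}) = 1"
proof -
  have "V.independent {e0 :: nat \<Rightarrow> 'a}" using e0_nz by (intro V.independent_insertI) (auto simp: V.independent_empty)
  then show ?thesis using V.dim_span_eq_card_independent by fastforce
qed

lemma indep2:
  fixes v :: "nat \<Rightarrow> 'a::field"
  assumes "v 0 = 0" "v \<noteq> 0"
  shows "V.independent {e0, v}"
proof -
  have iv: "V.independent {v}" using assms(2) by (intro V.independent_insertI) (auto simp: V.independent_empty)
  have "e0 \<notin> V.span {v}"
  proof
    assume "e0 \<in> V.span {v}"
    then obtain k where "e0 = fscale k v" unfolding V.span_singleton by auto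
    then have "e0 0 = fscale k v 0" by simp
    then show False using assms(1) by (simp add: fscale_def)
  qed
  then show ?thesis by (rule V.independent_insertI[OF _ iv])
qed

lemma dim_pl:
  fixes v :: "nat \<Rightarrow> 'a::field"
  assumes "v 0 = 0" "v \<noteq> 0"
  shows "V.dim (pl v) = 2"
proof -
  have "e0 \<noteq> v" using assms(1) by (metis e0_0 one_neq_zero)
  then show ?thesis unfolding pl_def using V.dim_span_eq_card_independent[OF indep2[OF assms]] by simp
qed

lemma inter_pl:
  fixes v w :: "nat \<Rightarrow> 'a::field"
  assumes "v 0 = 0" "w 0 = 0" "v 1 = 1" "w 1 = 1" "v \<noteq> w"
  shows "pl v \<inter> pl w = V.span {e0}"
proof
  show "V.span {e0} \<subseteq> pl v \<inter> pl w" unfolding pl_def by (auto intro: V.span_mono[THEN subsetD])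
next
  show "pl v \<inter> pl w \<subseteq> V.span {e0}"
  proof
    fix x assume xx: "x \<in> pl v \<inter> pl w"
    then have "x \<in> pl v" by blast
    then obtain k c where x1: "x = (\<lambda>i. k * e0 i + c * v i)" unfolding pl_def mem_span2 by blast
    obtain k' d where x2: "x = (\<lambda>i. k' * e0 i + d * w i)" using xx unfolding pl_def Int_iff mem_span2 by blast
    obtain i where i: "v i \<noteq> w i" using assms(5) by blast
    have i0: "i \<noteq> 0" using i assms by auto
    then obtain j where j: "i = Suc j" by (cases i) auto
    have "x (Suc 0) = c" using assms(3) by (subst x1) simp
    moreover have "x (Suc 0) = d" using assms(4) by (subst x2) simp
    ultimately have cd: "c = d" by simp
    have "c * v i = d * w i" using fun_cong[OF x1, of i] fun_cong[OF x2, of i] j by simp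
    then have "c * (v i - w i) = 0" using cd by (simp add: algebra_simps)
    then have "c = 0" using i by simp
    then show "x \<in> V.span {e0}" unfolding mem_span1 using x1 by auto
  qed
qed

lemma fvec_subspace: "V.subspace (fvec n :: (nat \<Rightarrow> 'a::field) set)"
  unfolding V.subspace_def fvec_def by (auto simp: fscale_def)

lemma pl_Pq:
  fixes v :: "nat \<Rightarrow> 'a::field"
  assumes "v \<in> fvec n" "n \<ge> 1"
  shows "pl v \<in> Pq TYPE('a) n"
proof -
  have "e0 \<in> fvec n" using assms(2) by (auto simp: fvec_def e0_def)
  then have "pl v \<subseteq> fvec n" unfolding pl_def using assms(1)
    by (intro V.span_minimal fvec_subspace) auto
  then show ?thesis unfolding Pq_def pl_def by auto
qed

lemma zero_span: "zero_space = V.span {}"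
  by (simp add: zero_space_def zero_fun_def)

lemma zero_Pq: "zero_space \<in> Pq TYPE('a::field) n"
  unfolding Pq_def zero_span by (auto simp: fvec_def)

lemma dim_zero: "sdim (zero_space :: (nat \<Rightarrow> 'a::field) set) = 0"
  unfolding sdim_eq zero_span using V.dim_span_eq_card_independent[OF V.independent_empty] by simp

lemma zero_inter: "zero_space \<inter> pl v = zero_space" "pl v \<inter> zero_space = zero_space"
  unfolding zero_span pl_def using V.span_zero by auto

theorem corollary3:
  assumes "card (UNIV :: 'a::{finite,field} set) > 2"
  shows "\<exists>n\<ge>3. \<exists>U. linear_code TYPE('a) n U \<and> equidistant U \<and> card U \<ge> 2 ^ (n + 1)"
proof -
  have "\<not> (UNIV :: 'a set) \<subseteq> {0, 1}"
  proof
    assume "(UNIV :: 'a set) \<subseteq> {0, 1}"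
    then have "card (UNIV :: 'a set) \<le> card {0 :: 'a, 1}" by (intro card_mono) auto
    also have "\<dots> \<le> 2" by (simp add: card_insert_le_m1)
    finally show False using assms by simp
  qed
  then obtain a :: 'a where a0: "a \<noteq> 0" and a1: "a \<noteq> 1" by blast
  define A where "A = {0, 1, a}"
  have cA: "card A = 3" using a0 a1 by (simp add: A_def)
  define vv where "vv xs = (\<lambda>i. if i = 1 then 1 else if 2 \<le> i \<and> i < 8 then xs ! (i - 2) else (0::'a))" for xs :: "'a list"
  define L where "L = {xs. set xs \<subseteq> A \<and> length xs = 6}"
  have cL: "card L = 729" unfolding L_def card_lists_length_eq[OF finite] cA by simp
  have injL: "inj_on vv L"
  proof (rule inj_onI)
    fix xs ys assume xs: "xs \<in> L" and ys: "ys \<in> L" and e: "vv xs = vv ys"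
    show "xs = ys"
    proof (rule nth_equalityI)
      show "length xs = length ys" using xs ys by (simp add: L_def)
      fix j assume "j < length xs"
      then have j: "j < 6" using xs by (simp add: L_def)
      have "vv xs (j + 2) = vv ys (j + 2)" using e by simp
      then show "xs ! j = ys ! j" using j by (simp add: vv_def)
    qed
  qed
  have "card (vv ` L) = 729" using card_image[OF injL] cL by simp
  then obtain W where WL: "W \<subseteq> vv ` L" and cW: "card W = 511" and fW: "finite W"
    using obtain_subset_with_card_n[of 511 "vv ` L"] by auto
  have W0: "v 0 = 0" if "v \<in> W" for v using that WL by (auto simp: vv_def)
  have W1: "v 1 = 1" if "v \<in> W" for v using that WL by (auto simp: vv_def)
  have Wnz: "v \<noteq> 0" if "v \<in> W" for v
  proof
    assume "v = 0" then have "v 1 = 0" by simp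
    then show False using W1[OF that] by simp
  qed
  have Wf: "v \<in> fvec 8" if "v \<in> W" for v using that WL by (auto simp: vv_def fvec_def)
  have dpl: "sdim (pl v) = 2" if "v \<in> W" for v
    using dim_pl[OF W0[OF that] Wnz[OF that]] by (simp add: sdim_eq)
  have dint: "sdim (pl v \<inter> pl w) = 1" if "v \<in> W" "w \<in> W" "v \<noteq> w" for v w
    using inter_pl[OF W0[OF that(1)] W0[OF that(2)] W1[OF that(1)] W1[OF that(2)] that(3)] dim_line
    by (simp add: sdim_eq)
  have injW: "inj_on pl W"
  proof (rule inj_onI, rule ccontr)
    fix v w assume v: "v \<in> W" and w: "w \<in> W" and e: "pl v = pl w" and ne: "v \<noteq> w"
    have "sdim (pl v \<inter> pl w) = 2" using e dpl[OF v] by simp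
    then show False using dint[OF v w ne] by simp
  qed
  have znot: "zero_space \<notin> pl ` W"
  proof
    assume "zero_space \<in> pl ` W"
    then obtain v where v: "v \<in> W" and zv: "zero_space = pl v" by blast
    have "sdim (pl v) = 0" unfolding zv[symmetric] by (rule dim_zero)
    then show False using dpl[OF v] by simp
  qed
  define U where "U = insert zero_space (pl ` W)"
  have fU: "finite U" using fW by (simp add: U_def)
  have cU: "card U = 2 ^ 9" unfolding U_def using znot fW card_image[OF injW] cW by simp
  have sub: "U \<subseteq> Pq TYPE('a) 8" unfolding U_def using zero_Pq pl_Pq[OF Wf] by auto
  have eqd: "\<forall>X\<in>U. \<forall>Y\<in>U. X \<noteq> Y \<longrightarrow> dS X Y = 2"
  proof (intro ballI impI)
    fix X Y assume X: "X \<in> U" and Y: "Y \<in> U" and ne: "X \<noteq> Y"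
    show "dS X Y = 2"
    proof (cases "X = zero_space")
      case True
      then obtain w where w: "w \<in> W" "Y = pl w" using Y ne by (auto simp: U_def)
      then show ?thesis using True dpl dim_zero[where 'a='a] zero_inter[where 'a='a] by (simp add: dS_def)
    next
      case False
      then obtain v where v: "v \<in> W" "X = pl v" using X by (auto simp: U_def)
      show ?thesis
      proof (cases "Y = zero_space")
        case True
        then show ?thesis using v dpl dim_zero[where 'a='a] zero_inter[where 'a='a] by (simp add: dS_def)
      next
        case False
        then obtain w where w: "w \<in> W" "Y = pl w" using Y by (auto simp: U_def)
        then have "v \<noteq> w" using v ne by blast
        then show ?thesis using v w dpl dint by (simp add: dS_def)
      qed
    qed
  qed
  have "linear_code TYPE('a) 8 U \<and> equidistant U"
    by (rule code_from_family[OF fU cU _ sub eqd]) (simp add: U_def)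
  then show ?thesis using cU by (intro exI[of _ "8::nat"]) auto
qed

end
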